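(* Let $|\psi_{{\sf A}{\sf B}}\rangle\in\mathbb C^{d_{\sf A}}\otimes\mathbb C^{d_{\sf B}}$ be a unit vector and $\bar\omega_{\sf A}=\mathrm{tr}_{\sf B}\big(S_{\sf B}|\psi_{{\sf A}{\sf B}}\rangle\langle\psi_{{\sf A}{\sf B}}|^{\otimes2}\big)+\frac{S_{\sf A}}{\mathrm{tr}S_{\sf A}}\,\mathrm{tr}\big(A_{\sf A}A_{\sf B}|\psi_{{\sf A}{\sf B}}\rangle\langle\psi_{{\sf A}{\sf B}}|^{\otimes2}\big)$. Then $\bar\omega_{\sf A}$ belongs to the convex hull of $\{|\phi\rangle\langle\phi|^{\otimes2}:\phi\in\mathbb C^{d_{\sf A}},\ \|\phi\|=1\}$.
   Context: $|\psi_{{\sf A}{\sf B}}\rangle^{\otimes2}$ is regarded as a vector in $\mathbb C^{d_{\sf A}}_1\otimes\mathbb C^{d_{\sf B}}_2\otimes\mathbb C^{d_{\sf A}}_3\otimes\mathbb C^{d_{\sf B}}_4$; $\mathrm{tr}_{\sf B}$ is the partial trace over factors $2,4$. $S_{\sf A}$, $A_{\sf A}$ are the projectors onto the symmetric and antisymmetric subspaces of $\mathbb C^{d_{\sf A}}_1\otimes\mathbb C^{d_{\sf A}}_3$; $S_{\sf B}$, $A_{\sf B}$ those of $\mathbb C^{d_{\sf B}}_2\otimes\mathbb C^{d_{\sf B}}_4$ (extended by identities where needed). *)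

theory Defs
  imports "HOL-Analysis.Analysis"
begin

text \<open>Vectors in C^dA (x) C^dB are elements of complex ^ ('a * 'b), with finite index
types 'a (basis of C^dA) and 'b (basis of C^dB).  Operators on C^dA (x) C^dA
(factors 1,3) are matrices complex ^ ('a * 'a) ^ ('a * 'a); the entry
M $ (i,k) $ (i',k') is the matrix element <i k| M |i' k'>.\<close>

definition sym_proj :: "('x \<times> 'x) \<Rightarrow> ('x \<times> 'x) \<Rightarrow> complex" where
  "sym_proj r c = ((if r = c then 1 else 0) + (if r = (snd c, fst c) then 1 else 0)) / 2"

definition antisym_proj :: "('x \<times> 'x) \<Rightarrow> ('x \<times> 'x) \<Rightarrow> complex" where
  "antisym_proj r c = ((if r = c then 1 else 0) - (if r = (snd c, fst c) then 1 else 0)) / 2"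

text \<open>Components of |psi><psi|^{(x)2} in C^dA_1 (x) C^dB_2 (x) C^dA_3 (x) C^dB_4:
psi2 psi (i,j,k,l) = psi_{ij} psi_{kl}.\<close>
definition psi2 :: "complex ^ ('a::finite \<times> 'b::finite) \<Rightarrow> 'a \<Rightarrow> 'b \<Rightarrow> 'a \<Rightarrow> 'b \<Rightarrow> complex" where
  "psi2 psi i j k l = psi $ (i, j) * psi $ (k, l)"

definition rho2 :: "complex ^ ('a::finite \<times> 'b::finite) \<Rightarrow> 'a \<Rightarrow> 'b \<Rightarrow> 'a \<Rightarrow> 'b \<Rightarrow>
                     'a \<Rightarrow> 'b \<Rightarrow> 'a \<Rightarrow> 'b \<Rightarrow> complex" where
  "rho2 psi i j k l i' j' k' l' = psi2 psi i j k l * cnj (psi2 psi i' j' k' l')"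

text \<open>tr_B (S_B rho): an operator on factors 1,3.\<close>
definition trB_SB :: "complex ^ ('a::finite \<times> 'b::finite) \<Rightarrow> complex ^ ('a \<times> 'a) ^ ('a \<times> 'a)" where
  "trB_SB psi = (\<chi> r c. \<Sum>j\<in>UNIV. \<Sum>l\<in>UNIV. \<Sum>j'\<in>UNIV. \<Sum>l'\<in>UNIV.
      sym_proj (j, l) (j', l') * rho2 psi (fst r) j' (snd r) l' (fst c) j (snd c) l)"

text \<open>tr (A_A A_B rho), where A_A acts on factors 1,3 and A_B on factors 2,4.\<close>
definition tr_AA_AB :: "complex ^ ('a::finite \<times> 'b::finite) \<Rightarrow> complex" where
  "tr_AA_AB psi = (\<Sum>i\<in>UNIV. \<Sum>j\<in>UNIV. \<Sum>k\<in>UNIV. \<Sum>l\<in>UNIV.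
      \<Sum>i'\<in>UNIV. \<Sum>j'\<in>UNIV. \<Sum>k'\<in>UNIV. \<Sum>l'\<in>UNIV.
      antisym_proj (i, k) (i', k') * antisym_proj (j, l) (j', l') * rho2 psi i' j' k' l' i j k l)"

definition SA :: "complex ^ ('a::finite \<times> 'a) ^ ('a \<times> 'a)" where
  "SA = (\<chi> r c. sym_proj r c)"

definition mtrace :: "complex ^ 'n::finite ^ 'n \<Rightarrow> complex" where
  "mtrace M = (\<Sum>r\<in>UNIV. M $ r $ r)"

definition omega_bar :: "complex ^ ('a::finite \<times> 'b::finite) \<Rightarrow> complex ^ ('a \<times> 'a) ^ ('a \<times> 'a)" where
  "omega_bar psi = trB_SB psi + (\<chi> r c. (SA $ r $ c / mtrace (SA :: complex ^ ('a \<times> 'a) ^ ('a \<times> 'a))) * tr_AA_AB psi)"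

definition proj2 :: "complex ^ ('a::finite) \<Rightarrow> complex ^ ('a \<times> 'a) ^ ('a \<times> 'a)" where
  "proj2 phi = (\<chi> r c. phi $ fst r * phi $ snd r * cnj (phi $ fst c * phi $ snd c))"

end

theory Submission
  imports Defs
begin


definition U4 :: "complex set" where "U4 = {1, \<i>, -1, -\<i>}"

lemma U4_sum:
  assumes "p \<le> 2" "q \<le> (2::nat)"
  shows "(\<Sum>u\<in>U4. u ^ p * cnj u ^ q) = (if p = q then 4 else 0)"
proof -
  have d: "(1::complex) \<noteq> \<i>" "(1::complex) \<noteq> -1" "(1::complex) \<noteq> -\<i>" "\<i> \<noteq> -1" "\<i> \<noteq> -\<i>" "-1 \<noteq> -\<i>"
    by (auto simp: complex_eq_iff)
  have s: "(\<Sum>u\<in>U4. g u) = g 1 + g \<i> + g (-1) + g (-\<i>)" for g :: "complex \<Rightarrow> complex"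
    using d by (simp add: U4_def add.assoc)
  have "p = 0 \<or> p = 1 \<or> p = 2" "q = 0 \<or> q = 1 \<or> q = 2" using assms by auto
  then show ?thesis unfolding s
    by (elim disjE) (simp_all add: power2_eq_square)
qed

lemma multi_eq:
  fixes j l j' l' :: 'j
  shows "(\<forall>k. (if k = j then 1 else 0) + (if k = l then 1 else (0::nat)) = (if k = j' then 1 else 0) + (if k = l' then 1 else (0::nat)))
    \<longleftrightarrow> (j = j' \<and> l = l') \<or> (j = l' \<and> l = j')"
proof
  assume h: "\<forall>k. (if k = j then 1 else 0) + (if k = l then 1 else (0::nat)) = (if k = j' then 1 else 0) + (if k = l' then 1 else (0::nat))"
  note a = h[rule_format, of j]
  note b = h[rule_format, of l]
  note c = h[rule_format, of j']
  show "(j = j' \<and> l = l') \<or> (j = l' \<and> l = j')"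
  proof (cases "j = j'")
    case True
    then have "l = l'" using b by (auto split: if_split_asm)
    then show ?thesis using True by simp
  next
    case False
    then have "j = l'" using a by (auto split: if_split_asm)
    moreover have "l = j'" using c False by (auto split: if_split_asm)
    ultimately show ?thesis by simp
  qed
next
  assume "(j = j' \<and> l = l') \<or> (j = l' \<and> l = j')"
  then show "\<forall>k. (if k = j then 1 else 0) + (if k = l then 1 else (0::nat)) = (if k = j' then 1 else 0) + (if k = l' then 1 else (0::nat))"
    by (elim disjE conjE) (simp_all add: add.commute)
qed

lemma phase_avg:
  fixes j l j' l' :: "'j::finite"
  shows "(\<Sum>z\<in>PiE UNIV (\<lambda>_. U4). z j * z l * cnj (z j') * cnj (z l')) =
    (if (j = j' \<and> l = l') \<or> (j = l' \<and> l = j') then 4 ^ CARD('j) else 0)"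
proof -
  define p where "p k = (if k = j then 1 else 0) + (if k = l then 1 else (0::nat))" for k
  define q where "q k = (if k = j' then 1 else 0) + (if k = l' then 1 else (0::nat))" for k
  have pr: "(\<Prod>k\<in>UNIV. w k ^ p k * cnj (w k) ^ q k) = w j * w l * cnj (w j') * cnj (w l')" for w :: "'j \<Rightarrow> complex"
  proof -
    have e: "(\<Prod>k\<in>UNIV. f k ^ (if k = i then 1 else 0)) = f i" for f :: "'j \<Rightarrow> complex" and i
    proof -
      have "(\<Prod>k\<in>UNIV. f k ^ (if k = i then 1 else 0)) = (\<Prod>k\<in>UNIV. if k = i then f k else 1)"
        by (rule prod.cong) auto
      then show ?thesis by simp
    qed
    have "(\<Prod>k\<in>UNIV. w k ^ p k * cnj (w k) ^ q k) =
       (\<Prod>k\<in>UNIV. w k ^ (if k = j then 1 else 0)) * (\<Prod>k\<in>UNIV. w k ^ (if k = l then 1 else 0)) *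
       ((\<Prod>k\<in>UNIV. cnj (w k) ^ (if k = j' then 1 else 0)) * (\<Prod>k\<in>UNIV. cnj (w k) ^ (if k = l' then 1 else 0)))"
      unfolding p_def q_def power_add prod.distrib by (simp add: mult.assoc)
    also have "\<dots> = w j * w l * cnj (w j') * cnj (w l')" 
      using e[of w] e[of "\<lambda>k. cnj (w k)"] by (simp add: mult.assoc)
    finally show ?thesis .
  qed
  have pb: "p k \<le> 2" "q k \<le> 2" for k unfolding p_def q_def by auto
  have "(\<Sum>z\<in>PiE UNIV (\<lambda>_. U4). z j * z l * cnj (z j') * cnj (z l')) =
        (\<Sum>z\<in>PiE UNIV (\<lambda>_. U4). \<Prod>k\<in>UNIV. z k ^ p k * cnj (z k) ^ q k)"
    using pr by simp
  also have "\<dots> = (\<Prod>k\<in>UNIV. \<Sum>u\<in>U4. u ^ p k * cnj u ^ q k)"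
    by (rule prod_sum_PiE[symmetric]) (auto simp: U4_def)
  also have "\<dots> = (\<Prod>k\<in>UNIV. if p k = q k then 4 else 0)"
    using U4_sum pb by simp
  also have "\<dots> = (if \<forall>k. p k = q k then 4 ^ CARD('j) else 0)"
    by (auto simp: prod_zero_iff)
  also have "(\<forall>k. p k = q k) \<longleftrightarrow> (j = j' \<and> l = l') \<or> (j = l' \<and> l = j')"
    unfolding p_def q_def by (rule multi_eq)
  finally show ?thesis .
qed




definition phasevec :: "('j::finite \<Rightarrow> complex ^ 'a::finite) \<Rightarrow> ('j \<Rightarrow> complex) \<Rightarrow> complex ^ 'a" where
  "phasevec m z = (\<chi> a. \<Sum>j\<in>UNIV. z j * m j $ a)"

lemma ifor_split: "(if A \<or> B then x else 0) = (if A then x else 0) + (if B then x else 0) - (if A \<and> B then x else (0::complex))"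
  by auto

lemma d1: fixes j l :: "'j::finite" shows "(\<Sum>j'\<in>UNIV. \<Sum>l'\<in>UNIV. if j = j' \<and> l = l' then f j' l' else 0) = (f j l :: complex)"
proof -
  have "(\<Sum>j'\<in>UNIV. \<Sum>l'\<in>UNIV. if j = j' \<and> l = l' then f j' l' else 0) =
     (\<Sum>j'\<in>UNIV. if j = j' then (\<Sum>l'\<in>UNIV. if l = l' then f j' l' else 0) else 0)"
    by (rule sum.cong) auto
  then show ?thesis by simp
qed

lemma d2: fixes j l :: "'j::finite" shows "(\<Sum>j'\<in>UNIV. \<Sum>l'\<in>UNIV. if j = l' \<and> l = j' then f j' l' else 0) = (f l j :: complex)"
proof -
  have "(\<Sum>j'\<in>UNIV. \<Sum>l'\<in>UNIV. if j = l' \<and> l = j' then f j' l' else 0) =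
     (\<Sum>j'\<in>UNIV. if l = j' then (\<Sum>l'\<in>UNIV. if j = l' then f j' l' else 0) else 0)"
    by (rule sum.cong) auto
  then show ?thesis by simp
qed

lemma d3: fixes j :: "'j::finite" shows "(\<Sum>l\<in>UNIV. \<Sum>j'\<in>UNIV. \<Sum>l'\<in>UNIV. if j = j' \<and> l = l' \<and> j = l' \<and> l = j' then f j' l' else 0) = (f j j :: complex)"
proof -
  have c: "(j = j' \<and> l = l' \<and> j = l' \<and> l = j') \<longleftrightarrow> (j = l \<and> (j = j' \<and> l = l'))" for l j' l' :: 'j by auto
  have i: "(if A \<and> B then x else 0) = (if A then (if B then x else 0) else (0::complex))" for A B x by simp
  have "(\<Sum>l\<in>UNIV. \<Sum>j'\<in>UNIV. \<Sum>l'\<in>UNIV. if j = j' \<and> l = l' \<and> j = l' \<and> l = j' then f j' l' else 0) =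
     (\<Sum>l\<in>UNIV. \<Sum>j'\<in>UNIV. \<Sum>l'\<in>UNIV. if j = l then (if j = j' \<and> l = l' then f j' l' else 0) else 0)"
    by (simp only: c i)
  also have "\<dots> = (\<Sum>l\<in>UNIV. if j = l then (\<Sum>j'\<in>UNIV. \<Sum>l'\<in>UNIV. if j = j' \<and> l = l' then f j' l' else 0) else 0)"
    apply (rule sum.cong, rule refl)
    subgoal for l by (cases "j = l") simp_all
    done
  also have "\<dots> = f j j" by (simp add: d1)
  finally show ?thesis .
qed

lemma G:
  fixes m :: "'j::finite \<Rightarrow> complex ^ 'a::finite"
  shows "(\<Sum>z\<in>PiE UNIV (\<lambda>_. U4). proj2 (phasevec m z)) $ (a,b) $ (a',b') =
    4 ^ CARD('j) * ((\<Sum>j\<in>UNIV. \<Sum>l\<in>UNIV. m j $ a * m l $ b * (cnj (m j $ a' * m l $ b') + cnj (m l $ a' * m j $ b')))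
       - (\<Sum>j\<in>UNIV. m j $ a * m j $ b * cnj (m j $ a' * m j $ b')))"
proof -
  let ?M = "\<lambda>j l j' l'. m j $ a * m l $ b * cnj (m j' $ a') * cnj (m l' $ b')"
  have e1: "proj2 (phasevec m z) $ (a,b) $ (a',b') =
     (\<Sum>j\<in>UNIV. \<Sum>l\<in>UNIV. \<Sum>j'\<in>UNIV. \<Sum>l'\<in>UNIV. ?M j l j' l' * (z j * z l * cnj (z j') * cnj (z l')))" for z
  proof -
    have "proj2 (phasevec m z) $ (a,b) $ (a',b') = (\<Sum>j\<in>UNIV. z j * m j $ a) * ((\<Sum>l\<in>UNIV. z l * m l $ b) *
       ((\<Sum>j'\<in>UNIV. cnj (z j') * cnj (m j' $ a')) * (\<Sum>l'\<in>UNIV. cnj (z l') * cnj (m l' $ b'))))"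
      by (simp add: proj2_def phasevec_def cnj_sum mult.assoc)
    also have "\<dots> = (\<Sum>j\<in>UNIV. \<Sum>l\<in>UNIV. \<Sum>j'\<in>UNIV. \<Sum>l'\<in>UNIV. (z j * m j $ a) * ((z l * m l $ b) *
       ((cnj (z j') * cnj (m j' $ a')) * (cnj (z l') * cnj (m l' $ b')))))"
      unfolding sum_distrib_right unfolding sum_distrib_left by (rule refl)
    also have "\<dots> = (\<Sum>j\<in>UNIV. \<Sum>l\<in>UNIV. \<Sum>j'\<in>UNIV. \<Sum>l'\<in>UNIV. ?M j l j' l' * (z j * z l * cnj (z j') * cnj (z l')))"
      by (simp add: mult_ac)
    finally show ?thesis .
  qed
  have "(\<Sum>z\<in>PiE UNIV (\<lambda>_. U4). proj2 (phasevec m z)) $ (a,b) $ (a',b') =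
     (\<Sum>j\<in>UNIV. \<Sum>l\<in>UNIV. \<Sum>j'\<in>UNIV. \<Sum>l'\<in>UNIV. ?M j l j' l' *
        (\<Sum>z\<in>PiE UNIV (\<lambda>_. U4). z j * z l * cnj (z j') * cnj (z l')))"
    unfolding sum_component e1 by (simp add: sum_distrib_left sum.swap[of _ "PiE UNIV (\<lambda>_. U4)"])
  also have "\<dots> = (\<Sum>j\<in>UNIV. \<Sum>l\<in>UNIV. \<Sum>j'\<in>UNIV. \<Sum>l'\<in>UNIV. ?M j l j' l' *
        (if (j = j' \<and> l = l') \<or> (j = l' \<and> l = j') then 4 ^ CARD('j) else 0))"
    by (simp only: phase_avg)
  also have "\<dots> = 4 ^ CARD('j) * ((\<Sum>j\<in>UNIV. \<Sum>l\<in>UNIV. ?M j l j l + ?M j l l j) - (\<Sum>j\<in>UNIV. ?M j j j j))"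
    unfolding ifor_split
    by (simp add: ring_distribs sum.distrib sum_subtractf sum_distrib_left if_distrib[of "\<lambda>x. _ * x"] d1 d2 d3 mult_ac cong: if_cong)
  finally show ?thesis by (simp add: ring_distribs mult_ac)
qed



lemma ifmul_diff: "((if P then 1 else 0) - (if Q then 1 else 0)) / 2 * x =
   ((if P then x else 0) - (if Q then x else 0)) / (2::complex)"
  by (cases P; cases Q) simp_all

lemma ifmul_add: "((if P then 1 else 0) + (if Q then 1 else 0)) / 2 * x =
   ((if P then x else 0) + (if Q then x else 0)) / (2::complex)"
  by (cases P; cases Q) simp_all

lemma e: "antisym_proj (a,c) (a',c') * x = ((if a = a' \<and> c = c' then x else 0) - (if a = c' \<and> c = a' then x else 0)) / (2::complex)"
  unfolding antisym_proj_def prod.inject fst_conv snd_conv by (rule ifmul_diff)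

lemma e2: "sym_proj (a,c) (a',c') * x = ((if a = a' \<and> c = c' then x else 0) + (if a = c' \<and> c = a' then x else 0)) / (2::complex)"
  unfolding sym_proj_def prod.inject fst_conv snd_conv by (rule ifmul_add)


lemma anti2:
  fixes a c :: "'x::finite"
  shows "(\<Sum>a'\<in>UNIV. \<Sum>c'\<in>UNIV. antisym_proj (a,c) (a',c') * g a' c') = (g a c - g c a) / 2"
proof -
  show ?thesis unfolding e
    by (simp only: sum_divide_distrib[symmetric] sum_subtractf d1 d2)
qed

lemma sym2:
  fixes a c :: "'x::finite"
  shows "(\<Sum>a'\<in>UNIV. \<Sum>c'\<in>UNIV. sym_proj (a,c) (a',c') * g a' c') = (g a c + g c a) / 2"
proof -
  show ?thesis unfolding e2
    by (simp only: sum_divide_distrib[symmetric] sum.distrib d1 d2)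
qed

lemma anti4:
  fixes i k :: "'a::finite" and j l :: "'b::finite"
  shows "(\<Sum>i'\<in>UNIV. \<Sum>j'\<in>UNIV. \<Sum>k'\<in>UNIV. \<Sum>l'\<in>UNIV.
      antisym_proj (i, k) (i', k') * antisym_proj (j, l) (j', l') * f i' j' k' l') =
    (f i j k l - f k j i l - f i l k j + f k l i j) / 4"
proof -
  have "(\<Sum>i'\<in>UNIV. \<Sum>j'\<in>UNIV. \<Sum>k'\<in>UNIV. \<Sum>l'\<in>UNIV.
      antisym_proj (i, k) (i', k') * antisym_proj (j, l) (j', l') * f i' j' k' l') =
      (\<Sum>i'\<in>UNIV. \<Sum>k'\<in>UNIV. antisym_proj (i, k) (i', k') * (\<Sum>j'\<in>UNIV. \<Sum>l'\<in>UNIV.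
        antisym_proj (j, l) (j', l') * f i' j' k' l'))"
    by (rule sum.cong[OF refl], subst sum.swap, rule sum.cong[OF refl], simp only: sum_distrib_left mult.assoc)
  also have "\<dots> = (\<Sum>i'\<in>UNIV. \<Sum>k'\<in>UNIV. antisym_proj (i, k) (i', k') * ((f i' j k' l - f i' l k' j) / 2))"
    by (simp only: anti2)
  also have "\<dots> = ((f i j k l - f i l k j) / 2 - (f k j i l - f k l i j) / 2) / 2"
    by (rule anti2)
  also have "\<dots> = (f i j k l - f k j i l - f i l k j + f k l i j) / 4" by (simp add: field_simps)
  finally show ?thesis .
qed

lemma swap3: "(\<Sum>j\<in>(UNIV::'j::finite set). \<Sum>k\<in>(UNIV::'k::finite set). \<Sum>l\<in>UNIV. F j k l) =
   (\<Sum>j\<in>UNIV. \<Sum>k\<in>UNIV. \<Sum>l\<in>UNIV. (F l k j :: complex))"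
proof -
  have "(\<Sum>j\<in>(UNIV::'j set). \<Sum>k\<in>(UNIV::'k set). \<Sum>l\<in>UNIV. F j k l) = (\<Sum>j\<in>UNIV. \<Sum>l\<in>UNIV. \<Sum>k\<in>UNIV. F j k l)"
    by (rule sum.cong[OF refl], rule sum.swap)
  also have "\<dots> = (\<Sum>l\<in>UNIV. \<Sum>j\<in>UNIV. \<Sum>k\<in>UNIV. F j k l)" by (rule sum.swap)
  also have "\<dots> = (\<Sum>l\<in>UNIV. \<Sum>k\<in>UNIV. \<Sum>j\<in>UNIV. F j k l)"
    by (rule sum.cong[OF refl], rule sum.swap)
  finally show ?thesis .
qed

lemma tr_AA_AB_eq:
  fixes psi :: "complex ^ ('a::finite \<times> 'b::finite)"
  shows "tr_AA_AB psi = (\<Sum>i\<in>UNIV. \<Sum>j\<in>UNIV. \<Sum>k\<in>UNIV. \<Sum>l\<in>UNIV.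
     (psi $ (i,j) * psi $ (k,l) - psi $ (i,l) * psi $ (k,j)) * cnj (psi $ (i,j) * psi $ (k,l))) / 2"
proof -
  have "tr_AA_AB psi = (\<Sum>i\<in>UNIV. \<Sum>j\<in>UNIV. \<Sum>k\<in>UNIV. \<Sum>l\<in>UNIV.
     (psi $ (i,j) * psi $ (k,l) - psi $ (k,j) * psi $ (i,l) - psi $ (i,l) * psi $ (k,j) + psi $ (k,l) * psi $ (i,j))
       * cnj (psi $ (i,j) * psi $ (k,l)) / 4)"
    unfolding tr_AA_AB_def rho2_def psi2_def anti4 by (rule sum.cong[OF refl])+ (simp add: algebra_simps)
  also have "\<dots> = (\<Sum>i\<in>UNIV. \<Sum>j\<in>UNIV. \<Sum>k\<in>UNIV. \<Sum>l\<in>UNIV.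
     (psi $ (i,j) * psi $ (k,l) - psi $ (i,l) * psi $ (k,j)) * cnj (psi $ (i,j) * psi $ (k,l)) / 2)"
    by (rule sum.cong[OF refl])+ (simp add: field_simps)
  finally show ?thesis by (simp only: sum_divide_distrib)
qed

lemma tr_AA_AB_real:
  fixes psi :: "complex ^ ('a::finite \<times> 'b::finite)"
  shows "tr_AA_AB psi = of_real ((\<Sum>i\<in>UNIV. \<Sum>j\<in>UNIV. \<Sum>k\<in>UNIV. \<Sum>l\<in>UNIV.
      (cmod (psi $ (i,j) * psi $ (k,l) - psi $ (i,l) * psi $ (k,j)))^2) / 4)"
proof -
  define X where "X i j k l = psi $ (i,j) * psi $ (k,l)" for i j k l
  define T where "T = (\<Sum>i\<in>UNIV. \<Sum>j\<in>UNIV. \<Sum>k\<in>UNIV. \<Sum>l\<in>UNIV. (X i j k l - X i l k j) * cnj (X i j k l))"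
  define S where "S = (\<Sum>i\<in>UNIV. \<Sum>j\<in>UNIV. \<Sum>k\<in>UNIV. \<Sum>l\<in>UNIV. (cmod (X i j k l - X i l k j))^2)"
  have T2: "T = (\<Sum>i\<in>UNIV. \<Sum>j\<in>UNIV. \<Sum>k\<in>UNIV. \<Sum>l\<in>UNIV. (X i l k j - X i j k l) * cnj (X i l k j))"
    unfolding T_def by (rule sum.cong[OF refl], rule swap3)
  have "2 * T = (\<Sum>i\<in>UNIV. \<Sum>j\<in>UNIV. \<Sum>k\<in>UNIV. \<Sum>l\<in>UNIV. (X i j k l - X i l k j) * cnj (X i j k l - X i l k j))"
    unfolding mult_2 apply (subst T2) unfolding T_def
    apply (simp only: sum.distrib[symmetric])
    apply (rule sum.cong[OF refl])+
    apply (simp add: algebra_simps)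
    done
  also have "\<dots> = of_real S"
    unfolding S_def by (simp only: of_real_sum complex_norm_square)
  finally have A: "T = of_real S / 2"
    by (simp add: field_simps)
  have B: "tr_AA_AB psi = T / 2" unfolding tr_AA_AB_eq T_def X_def by (simp only: sum_divide_distrib)
  have "tr_AA_AB psi = of_real S / 4" unfolding B A by simp
  then have "tr_AA_AB psi = of_real (S / 4)" by simp
  then show ?thesis unfolding S_def X_def .
qed



definition good :: "complex ^ ('a::finite \<times> 'a) ^ ('a \<times> 'a) \<Rightarrow> bool" where
  "good X \<longleftrightarrow> (\<exists>t\<ge>0. \<exists>Y\<in>convex hull {proj2 phi | phi :: complex ^ 'a. norm phi = 1}.
      X = t *\<^sub>R Y \<and> mtrace X = complex_of_real t)"

lemma scR: "(c *\<^sub>R X) $ i $ j = complex_of_real c * (X $ i $ j)"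
  by (simp only: vector_scaleR_component) (simp add: scaleR_conv_of_real)

lemma scRv: "(c *\<^sub>R v) $ i = complex_of_real c * (v $ i)"
  by (simp only: vector_scaleR_component) (simp add: scaleR_conv_of_real)

lemma mtrace_add: "mtrace (X + Y) = mtrace X + mtrace Y"
  by (simp add: mtrace_def sum.distrib)

lemma mtrace_scaleR: "mtrace (c *\<^sub>R X) = of_real c * mtrace X"
  unfolding mtrace_def scR by (simp add: sum_distrib_left)

lemma mtrace_zero: "mtrace 0 = 0"
  by (simp add: mtrace_def)

lemma proj2_scaleR: "proj2 (c *\<^sub>R v) = (c ^ 4) *\<^sub>R proj2 v"
  by (simp add: vec_eq_iff proj2_def scR scRv mult_ac eval_nat_numeral)

lemma proj2_zero: "proj2 0 = 0"
  by (simp add: vec_eq_iff proj2_def)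

lemma norm_vec_sq: "norm (v :: complex ^ 'n::finite) ^ 2 = (\<Sum>a\<in>UNIV. cmod (v $ a) ^ 2)"
  by (simp add: norm_vec_def L2_set_def sum_nonneg)

lemma sum_pairs_prod: "(\<Sum>r\<in>(UNIV::('a::finite \<times> 'b::finite) set). f (fst r) * g (snd r)) =
   (\<Sum>a\<in>UNIV. f a) * (\<Sum>b\<in>UNIV. (g b :: complex))"
  by (simp add: sum_product sum.cartesian_product split_beta)

lemma mtrace_proj2: "mtrace (proj2 (v :: complex ^ 'a::finite)) = of_real (norm v ^ 4)"
proof -
  have "mtrace (proj2 v) = (\<Sum>r\<in>UNIV. of_real (cmod (v $ fst r) ^ 2) * of_real (cmod (v $ snd r) ^ 2))"
    unfolding mtrace_def proj2_def
    by (rule sum.cong[OF refl]) (simp only: complex_norm_square, simp add: mult_ac)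
  also have "\<dots> = (\<Sum>a\<in>UNIV. of_real (cmod (v $ a) ^ 2)) * (\<Sum>b\<in>UNIV. of_real (cmod (v $ b) ^ 2))"
    by (rule sum_pairs_prod)
  also have "\<dots> = of_real (norm v ^ 2 * norm v ^ 2)"
    by (simp only: norm_vec_sq of_real_sum of_real_mult)
  finally show ?thesis by (simp add: eval_nat_numeral mult_ac)
qed

lemma good_zero: "good (0 :: complex ^ ('a::finite \<times> 'a) ^ ('a \<times> 'a))"
proof -
  define w :: "complex ^ 'a" where "w = (\<chi> i. 1)"
  have "w \<noteq> 0" by (simp add: w_def vec_eq_iff)
  then have "norm (sgn w) = 1" by (simp add: norm_sgn)
  then have "proj2 (sgn w) \<in> convex hull {proj2 phi | phi :: complex ^ 'a. norm phi = 1}"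
    by (intro hull_inc) blast
  then show ?thesis unfolding good_def
    by (intro exI[of _ 0] conjI bexI[of _ "proj2 (sgn w)"]) (auto simp: mtrace_zero)
qed

lemma good_add:
  assumes "good X" "good Y"
  shows "good (X + Y)"
proof -
  let ?H = "convex hull {proj2 phi | phi :: complex ^ 'a. norm phi = 1}"
  obtain t1 Y1 where 1: "t1 \<ge> 0" "Y1 \<in> ?H" "X = t1 *\<^sub>R Y1" "mtrace X = of_real t1"
    using assms(1) unfolding good_def by blast
  obtain t2 Y2 where 2: "t2 \<ge> 0" "Y2 \<in> ?H" "Y = t2 *\<^sub>R Y2" "mtrace Y = of_real t2"
    using assms(2) unfolding good_def by blast
  show ?thesis
  proof (cases "t1 + t2 = 0")
    case True
    then have "t1 = 0" "t2 = 0" using 1 2 by auto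
    then show ?thesis unfolding good_def using 1 2
      by (intro exI[of _ 0] conjI bexI[of _ Y1]) (auto simp: mtrace_add)
  next
    case False
    then have p: "t1 + t2 > 0" using 1 2 by auto
    define Z where "Z = (t1 / (t1 + t2)) *\<^sub>R Y1 + (t2 / (t1 + t2)) *\<^sub>R Y2"
    have "Z \<in> ?H" unfolding Z_def
    proof (rule convexD[OF convex_convex_hull 1(2) 2(2)])
      show "0 \<le> t1 / (t1 + t2)" "0 \<le> t2 / (t1 + t2)" using 1 2 p by auto
      show "t1 / (t1 + t2) + t2 / (t1 + t2) = 1" using p by (simp add: add_divide_distrib[symmetric])
    qed
    moreover have "X + Y = (t1 + t2) *\<^sub>R Z"
      unfolding Z_def 1(3) 2(3) using p by (simp add: scaleR_add_right)
    moreover have "mtrace (X + Y) = of_real (t1 + t2)"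
      by (simp add: mtrace_add 1(4) 2(4))
    ultimately show ?thesis unfolding good_def using p by (intro exI[of _ "t1 + t2"]) auto
  qed
qed

lemma good_scale:
  assumes "good X" "c \<ge> 0"
  shows "good (c *\<^sub>R X)"
proof -
  obtain t Y where 1: "t \<ge> 0" "Y \<in> convex hull {proj2 phi | phi :: complex ^ 'a. norm phi = 1}"
      "X = t *\<^sub>R Y" "mtrace X = of_real t"
    using assms(1) unfolding good_def by blast
  show ?thesis unfolding good_def using 1 assms(2)
    by (intro exI[of _ "c * t"] conjI bexI[of _ Y]) (auto simp: mtrace_scaleR)
qed

lemma good_proj2: "good (proj2 (v :: complex ^ 'a::finite))"
proof (cases "v = 0")
  case True
  then show ?thesis by (simp add: proj2_zero good_zero)
next
  case False
  then have n: "norm (sgn v) = 1" by (simp add: norm_sgn)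
  then have h: "proj2 (sgn v) \<in> convex hull {proj2 phi | phi :: complex ^ 'a. norm phi = 1}"
    by (intro hull_inc) blast
  have "v = norm v *\<^sub>R sgn v" using False by (simp add: sgn_div_norm)
  then have e: "proj2 v = (norm v ^ 4) *\<^sub>R proj2 (sgn v)"
    by (metis proj2_scaleR)
  show ?thesis unfolding good_def
    by (intro exI[of _ "norm v ^ 4"] conjI bexI[of _ "proj2 (sgn v)"] h e) (auto simp: mtrace_proj2)
qed

lemma good_sum:
  assumes "finite S" "\<And>x. x \<in> S \<Longrightarrow> good (f x)"
  shows "good (sum f S)"
  using assms by (induction S rule: finite_induct) (auto intro: good_add good_zero)



lemma ifone: "(if P then 1 else 0) * x = (if P then x else (0::complex))" by simp
lemma cnj_if: "cnj (if P then 1 else 0) = (if P then 1 else (0::complex))" by simp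
lemma sum_ifP: "(\<Sum>l\<in>A. if P then f l else 0) = (if P then (\<Sum>l\<in>A. f l) else (0::complex))" by simp

lemma SA_sums:
  fixes a b a' b' :: "'a::finite"
  shows "(\<Sum>j\<in>UNIV. \<Sum>l\<in>UNIV. (if a = j then 1 else 0) * (if b = l then 1 else 0) *
      (cnj ((if a' = j then 1 else 0) * (if b' = l then 1 else 0)) + cnj ((if a' = l then 1 else 0) * (if b' = j then 1 else 0))))
    = (if a' = a then (if b' = b then 1 else 0) else 0) + (if a' = b then (if b' = a then 1 else 0) else (0::complex))"
  apply (simp only: complex_cnj_mult cnj_if mult.assoc distrib_left)
  apply (simp only: ifone sum_ifP sum.distrib)
  apply simp
  done

lemma SA_sums2:
  fixes a b a' b' :: "'a::finite"
  shows "(\<Sum>j\<in>UNIV. (if a = j then 1 else 0) * (if b = j then 1 else 0) *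
      cnj ((if a' = j then 1 else 0) * (if b' = j then 1 else 0)))
    = (if b = a then (if a' = a then (if b' = a then 1 else 0) else 0) else (0::complex))"
  apply (simp only: complex_cnj_mult cnj_if mult.assoc distrib_left)
  apply (simp only: ifone sum_ifP sum.distrib)
  apply simp
  done

lemma coef: "complex_of_real (1 / (2 * 4 ^ n)) * (4 ^ n * (x - y)) + complex_of_real (1/2) * y = x / 2"
proof -
  have "complex_of_real (1 / (2 * 4 ^ n)) * 4 ^ n = 1/2"
    by (simp add: of_real_divide of_real_mult of_real_power)
  then have "complex_of_real (1 / (2 * 4 ^ n)) * (4 ^ n * (x - y)) = (x - y) / 2"
    by (metis mult.assoc mult.commute times_divide_eq_right mult_1)
  then show ?thesis by (simp add: field_simps)
qed

lemma addsc: "(c1 *\<^sub>R M1 + c2 *\<^sub>R M2) $ r $ c = complex_of_real c1 * (M1 $ r $ c) + complex_of_real c2 * (M2 $ r $ c)"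
  by (simp only: vector_add_component scR)

lemma SA_eq:
  defines "e \<equiv> (\<lambda>k. \<chi> a. if a = k then 1 else 0) :: 'a::finite \<Rightarrow> complex ^ 'a"
  shows "(SA :: complex ^ ('a \<times> 'a) ^ ('a \<times> 'a)) =
    (1 / (2 * 4 ^ CARD('a))) *\<^sub>R (\<Sum>z\<in>PiE UNIV (\<lambda>_. U4). proj2 (phasevec e z)) + (1/2) *\<^sub>R (\<Sum>k\<in>UNIV. proj2 (e k))"
proof -
  have "SA $ (a,b) $ (a',b') = ((1 / (2 * 4 ^ CARD('a))) *\<^sub>R (\<Sum>z\<in>PiE UNIV (\<lambda>_. U4). proj2 (phasevec e z)) + (1/2) *\<^sub>R (\<Sum>k\<in>UNIV. proj2 (e k))) $ (a,b) $ (a',b')"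
    for a b a' b' :: 'a
  proof -
    have L: "SA $ (a,b) $ (a',b') = ((if a = a' \<and> b = b' then 1 else 0) + (if a = b' \<and> b = a' then 1 else 0)) / (2::complex)"
      unfolding SA_def vec_lambda_beta sym_proj_def prod.inject fst_conv snd_conv by (rule refl)
    have D: "(\<Sum>k\<in>UNIV. proj2 (e k)) $ (a,b) $ (a',b') = (\<Sum>j\<in>UNIV. (if a = j then 1 else 0) * (if b = j then 1 else 0) *
      cnj ((if a' = j then 1 else 0) * (if b' = j then 1 else 0)))"
      unfolding sum_component proj2_def e_def vec_lambda_beta fst_conv snd_conv by (rule refl)
    have E1: "(if a' = a then if b' = b then 1 else 0 else 0) + (if a' = b then if b' = a then 1 else 0 else (0::complex)) =
        (if a = a' \<and> b = b' then 1 else 0) + (if a = b' \<and> b = a' then 1 else 0)"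
    proof -
      have "(a' = a \<and> b' = b) = (a = a' \<and> b = b')" "(a' = b \<and> b' = a) = (a = b' \<and> b = a')" by blast+
      then show ?thesis by (simp only: if_if_eq_conj)
    qed
    show ?thesis unfolding addsc G L D
      unfolding e_def vec_lambda_beta SA_sums E1 coef by (rule refl)
  qed
  then show ?thesis unfolding vec_eq_iff split_paired_All by blast
qed

lemma trB_entry:
  fixes psi :: "complex ^ ('a::finite \<times> 'b::finite)"
  shows "trB_SB psi $ (a,b) $ (a',b') =
    ((\<Sum>j\<in>UNIV. \<Sum>l\<in>UNIV. psi $ (a,j) * psi $ (b,l) * cnj (psi $ (a',j) * psi $ (b',l))) +
     (\<Sum>j\<in>UNIV. \<Sum>l\<in>UNIV. psi $ (a,l) * psi $ (b,j) * cnj (psi $ (a',j) * psi $ (b',l)))) / 2"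
  unfolding trB_SB_def vec_lambda_beta fst_conv snd_conv sym2 rho2_def psi2_def
  by (simp add: sum.distrib add_divide_distrib sum_divide_distrib)

lemma trB_eq:
  fixes psi :: "complex ^ ('a::finite \<times> 'b::finite)"
  defines "m \<equiv> (\<lambda>j. \<chi> a. psi $ (a,j)) :: 'b \<Rightarrow> complex ^ 'a"
  shows "trB_SB psi =
    (1 / (2 * 4 ^ CARD('b))) *\<^sub>R (\<Sum>z\<in>PiE UNIV (\<lambda>_. U4). proj2 (phasevec m z)) + (1/2) *\<^sub>R (\<Sum>j\<in>UNIV. proj2 (m j))"
proof -
  have "trB_SB psi $ (a,b) $ (a',b') = ((1 / (2 * 4 ^ CARD('b))) *\<^sub>R (\<Sum>z\<in>PiE UNIV (\<lambda>_. U4). proj2 (phasevec m z)) + (1/2) *\<^sub>R (\<Sum>j\<in>UNIV. proj2 (m j))) $ (a,b) $ (a',b')"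
    for a b a' b' :: 'a
  proof -
    have D: "(\<Sum>j\<in>UNIV. proj2 (m j)) $ (a,b) $ (a',b') = (\<Sum>j\<in>UNIV. m j $ a * m j $ b * cnj (m j $ a' * m j $ b'))"
      unfolding sum_component proj2_def vec_lambda_beta fst_conv snd_conv by (rule refl)
    have sw: "(\<Sum>j\<in>UNIV. \<Sum>l\<in>UNIV. psi $ (a,j) * psi $ (b,l) * cnj (psi $ (a',l) * psi $ (b',j))) =
       (\<Sum>j\<in>UNIV. \<Sum>l\<in>UNIV. psi $ (a,l) * psi $ (b,j) * cnj (psi $ (a',j) * psi $ (b',l)))"
      by (rule sum.swap)
    have "((1 / (2 * 4 ^ CARD('b))) *\<^sub>R (\<Sum>z\<in>PiE UNIV (\<lambda>_. U4). proj2 (phasevec m z)) + (1/2) *\<^sub>R (\<Sum>j\<in>UNIV. proj2 (m j))) $ (a,b) $ (a',b')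
      = (\<Sum>j\<in>UNIV. \<Sum>l\<in>UNIV. m j $ a * m l $ b * (cnj (m j $ a' * m l $ b') + cnj (m l $ a' * m j $ b'))) / 2"
      unfolding addsc G D coef by (rule refl)
    also have "\<dots> = ((\<Sum>j\<in>UNIV. \<Sum>l\<in>UNIV. psi $ (a,j) * psi $ (b,l) * cnj (psi $ (a',j) * psi $ (b',l))) +
       (\<Sum>j\<in>UNIV. \<Sum>l\<in>UNIV. psi $ (a,j) * psi $ (b,l) * cnj (psi $ (a',l) * psi $ (b',j)))) / 2"
      unfolding m_def vec_lambda_beta by (simp only: distrib_left sum.distrib)
    also have "\<dots> = trB_SB psi $ (a,b) $ (a',b')"
      unfolding trB_entry sw by (rule refl)
    finally show ?thesis by (rule sym)
  qed
  then show ?thesis unfolding vec_eq_iff split_paired_All by blast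
qed

lemma mtrace_pairs: "mtrace (M :: complex ^ ('a::finite \<times> 'a) ^ ('a \<times> 'a)) = (\<Sum>a\<in>UNIV. \<Sum>b\<in>UNIV. M $ (a,b) $ (a,b))"
  unfolding mtrace_def by (simp add: sum.cartesian_product split_beta)

lemma pairsum: "(\<Sum>r\<in>(UNIV::('a::finite \<times> 'b::finite) set). f r) = (\<Sum>a\<in>UNIV. \<Sum>b\<in>UNIV. (f (a,b) :: complex))"
  by (simp add: sum.cartesian_product split_beta)

lemma mtrace_SA: "\<exists>s>0. mtrace (SA :: complex ^ ('a::finite \<times> 'a) ^ ('a \<times> 'a)) = complex_of_real s"
proof -
  define s where "s = (\<Sum>r\<in>(UNIV :: ('a \<times> 'a) set). (1 + (if fst r = snd r then 1 else 0)) / (2::real))"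
  have "mtrace (SA :: complex ^ ('a \<times> 'a) ^ ('a \<times> 'a)) = complex_of_real s"
    unfolding mtrace_def SA_def vec_lambda_beta s_def of_real_sum
  proof (rule sum.cong[OF refl])
    fix r :: "'a \<times> 'a"
    obtain a b where r: "r = (a,b)" by (cases r)
    have "(r = (snd r, fst r)) = (fst r = snd r)" unfolding r by auto
    then show "sym_proj r r = complex_of_real ((1 + (if fst r = snd r then 1 else 0)) / 2)"
      unfolding sym_proj_def by simp
  qed
  moreover have "s > 0" unfolding s_def by (rule sum_pos) auto
  ultimately show ?thesis by blast
qed

lemma F4:
  fixes psi :: "complex ^ ('a::finite \<times> 'b::finite)"
  assumes "norm psi = 1"
  shows "(\<Sum>a\<in>UNIV. \<Sum>b\<in>UNIV. \<Sum>j\<in>UNIV. \<Sum>l\<in>UNIV. psi $ (a,j) * psi $ (b,l) * cnj (psi $ (a,j) * psi $ (b,l))) = 1"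
proof -
  define p where "p a j = psi $ (a,j) * cnj (psi $ (a,j))" for a j
  have N: "(\<Sum>a\<in>UNIV. \<Sum>j\<in>UNIV. p a j) = 1"
  proof -
    have "(\<Sum>r\<in>UNIV. complex_of_real (cmod (psi $ r) ^ 2)) = 1"
      using norm_vec_sq[of psi] assms by (simp only: of_real_sum[symmetric]) simp
    then have "(\<Sum>r\<in>UNIV. psi $ r * cnj (psi $ r)) = 1" by (simp only: complex_norm_square)
    then show ?thesis unfolding pairsum p_def .
  qed
  have "(\<Sum>a\<in>UNIV. \<Sum>b\<in>UNIV. \<Sum>j\<in>UNIV. \<Sum>l\<in>UNIV. psi $ (a,j) * psi $ (b,l) * cnj (psi $ (a,j) * psi $ (b,l)))
     = (\<Sum>a\<in>UNIV. \<Sum>j\<in>UNIV. \<Sum>b\<in>UNIV. \<Sum>l\<in>UNIV. p a j * p b l)"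
    unfolding p_def by (rule sum.cong[OF refl], subst sum.swap, simp add: mult_ac)
  also have "\<dots> = (\<Sum>a\<in>UNIV. \<Sum>j\<in>UNIV. p a j) * (\<Sum>b\<in>UNIV. \<Sum>l\<in>UNIV. p b l)"
    unfolding sum_distrib_right unfolding sum_distrib_left by (rule refl)
  finally show ?thesis unfolding N by simp
qed

lemma mtrace_omega:
  fixes psi :: "complex ^ ('a::finite \<times> 'b::finite)"
  assumes "norm psi = 1"
  shows "mtrace (trB_SB psi) + tr_AA_AB psi = 1"
proof -
  define F where "F a b j l = psi $ (a,j) * psi $ (b,l) * cnj (psi $ (a,j) * psi $ (b,l))" for a b j l
  define H where "H a b j l = psi $ (a,l) * psi $ (b,j) * cnj (psi $ (a,j) * psi $ (b,l))" for a b j l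
  have 1: "mtrace (trB_SB psi) = ((\<Sum>a\<in>UNIV. \<Sum>b\<in>UNIV. \<Sum>j\<in>UNIV. \<Sum>l\<in>UNIV. F a b j l) +
      (\<Sum>a\<in>UNIV. \<Sum>b\<in>UNIV. \<Sum>j\<in>UNIV. \<Sum>l\<in>UNIV. H a b j l)) / 2"
    unfolding mtrace_pairs trB_entry F_def H_def
    by (simp add: sum.distrib add_divide_distrib sum_divide_distrib)
  have 2: "tr_AA_AB psi = ((\<Sum>a\<in>UNIV. \<Sum>j\<in>UNIV. \<Sum>b\<in>UNIV. \<Sum>l\<in>UNIV. F a b j l) -
      (\<Sum>a\<in>UNIV. \<Sum>j\<in>UNIV. \<Sum>b\<in>UNIV. \<Sum>l\<in>UNIV. H a b j l)) / 2"
    unfolding tr_AA_AB_eq F_def H_def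
    by (simp add: sum_subtractf left_diff_distrib)
  have 3: "(\<Sum>a\<in>UNIV. \<Sum>j\<in>UNIV. \<Sum>b\<in>UNIV. \<Sum>l\<in>UNIV. G a b j l) =
        (\<Sum>a\<in>UNIV. \<Sum>b\<in>UNIV. \<Sum>j\<in>UNIV. \<Sum>l\<in>UNIV. G a b j l)" for G :: "'a \<Rightarrow> 'a \<Rightarrow> 'b \<Rightarrow> 'b \<Rightarrow> complex"
    by (rule sum.cong[OF refl], rule sum.swap)
  have 4: "(\<Sum>a\<in>UNIV. \<Sum>b\<in>UNIV. \<Sum>j\<in>UNIV. \<Sum>l\<in>UNIV. F a b j l) = 1"
    unfolding F_def by (rule F4[OF assms])
  show ?thesis unfolding 1 2 3 4 by (simp add: field_simps)
qed

theorem mainTheorem10: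
  fixes psi :: "complex ^ ('a::finite \<times> 'b::finite)"
  assumes "norm psi = 1"
  shows "omega_bar psi \<in> convex hull {proj2 phi | phi :: complex ^ 'a. norm phi = 1}"
proof -
  obtain s where s: "s > 0" "mtrace (SA :: complex ^ ('a \<times> 'a) ^ ('a \<times> 'a)) = complex_of_real s"
    using mtrace_SA by blast
  define \<tau> where "\<tau> = (\<Sum>i\<in>UNIV. \<Sum>j\<in>UNIV. \<Sum>k\<in>UNIV. \<Sum>l\<in>UNIV.
      (cmod (psi $ (i,j) * psi $ (k,l) - psi $ (i,l) * psi $ (k,j)))^2) / 4"
  have tau: "tr_AA_AB psi = complex_of_real \<tau>" unfolding \<tau>_def by (rule tr_AA_AB_real)
  have tau0: "\<tau> \<ge> 0" unfolding \<tau>_def by (intro divide_nonneg_pos sum_nonneg) auto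
  have om: "omega_bar psi = trB_SB psi + (\<tau> / s) *\<^sub>R (SA :: complex ^ ('a \<times> 'a) ^ ('a \<times> 'a))"
  proof -
    have "(\<chi> r c. (SA $ r $ c / mtrace (SA :: complex ^ ('a \<times> 'a) ^ ('a \<times> 'a))) * tr_AA_AB psi) =
        (\<tau> / s) *\<^sub>R (SA :: complex ^ ('a \<times> 'a) ^ ('a \<times> 'a))"
      unfolding vec_eq_iff scR vec_lambda_beta s(2) tau using s(1) by (simp add: field_simps)
    then show ?thesis unfolding omega_bar_def by simp
  qed
  have g: "good (omega_bar psi)"
    unfolding om trB_eq SA_eq
    using s(1) tau0
    by (intro good_add good_scale good_sum good_proj2) (auto intro!: finite_PiE simp: U4_def)
  have tr1: "mtrace (omega_bar psi) = 1"
  proof -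
    have "mtrace (omega_bar psi) = mtrace (trB_SB psi) + complex_of_real (\<tau> / s) * complex_of_real s"
      unfolding om mtrace_add mtrace_scaleR s(2) by (rule refl)
    also have "\<dots> = mtrace (trB_SB psi) + tr_AA_AB psi"
      using s(1) unfolding tau by (simp add: field_simps)
    also have "\<dots> = 1" by (rule mtrace_omega[OF assms])
    finally show ?thesis .
  qed
  obtain t Y where tY: "t \<ge> 0" "Y \<in> convex hull {proj2 phi | phi :: complex ^ 'a. norm phi = 1}"
      "omega_bar psi = t *\<^sub>R Y" "mtrace (omega_bar psi) = complex_of_real t"
    using g unfolding good_def by blast
  have "t = 1" using tY(4) tr1 by simp
  then show ?thesis using tY(2,3) by simp
qed


end
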